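(* Let $n$ be a positive integer and suppose there exists a 1-D $(n,4,2)$-OOC with exactly $J(1\times n,4,2)$ codewords. (1) If $n\equiv 1,3\pmod 6$ or $n\equiv 2,10\pmod{24}$, then for every factorization $n=uv$ with $u,v$ positive integers there exists a 2-D $(u\times v,4,2)$-OOC with exactly $J(u\times v,4,2)$ codewords. (2) If $n\equiv 4,20\pmod{24}$ and $n=2n_1$, then there exists a 2-D $(2\times n_1,4,2)$-OOC with exactly $J(2\times n_1,4,2)$ codewords.
   Context: A two-dimensional $(u\times v,k,\lambda)$ optical orthogonal code (2-D $(u\times v,k,\lambda)$-OOC) is a family $\mathcal C$ of $u\times v$ $(0,1)$-matrices, each of Hamming weight $k$, such that for all $A=(a_{ij}),B=(b_{ij})\in\mathcal C$ and every integer $r$ with $A\neq B$ or $r\not\equiv 0\pmod v$, one has $\sum_{i=0}^{u-1}\sum_{j=0}^{v-1}a_{ij}b_{i,j+r}\le\lambda$, column indices taken modulo $v$. A 1-D $(v,k,\lambda)$-OOC is a 2-D $(1\times v,k,\lambda)$-OOC. For $k=4,\lambda=2$ the Johnson bound is $J(u\times v,4,2)=\lfloor\frac{u}{4}\lfloor\frac{uv-1}{3}\lfloor\frac{uv-2}{2}\rfloor\rfloor\rfloor$. *)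

theory Defs
  imports Main
begin

text \<open>A u x v (0,1)-matrix is represented by its support: the set of positions (i,j)
  with entry 1, where i < u and j < v.\<close>

definition is_matrix :: "nat \<Rightarrow> nat \<Rightarrow> (nat \<times> nat) set \<Rightarrow> bool" where
  "is_matrix u v A \<longleftrightarrow> A \<subseteq> {0..<u} \<times> {0..<v}"

definition corr :: "nat \<Rightarrow> (nat \<times> nat) set \<Rightarrow> (nat \<times> nat) set \<Rightarrow> int \<Rightarrow> nat" where
  "corr v A B r = card {(i, j) \<in> A. (i, nat ((int j + r) mod int v)) \<in> B}"

definition is_2D_OOC :: "nat \<Rightarrow> nat \<Rightarrow> nat \<Rightarrow> nat \<Rightarrow> (nat \<times> nat) set set \<Rightarrow> bool" where
  "is_2D_OOC u v k lam C \<longleftrightarrow>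
     (\<forall>A\<in>C. is_matrix u v A \<and> card A = k) \<and>
     (\<forall>A\<in>C. \<forall>B\<in>C. \<forall>r::int. (A \<noteq> B \<or> \<not> (r mod int v = 0)) \<longrightarrow> corr v A B r \<le> lam)"

definition is_1D_OOC :: "nat \<Rightarrow> nat \<Rightarrow> nat \<Rightarrow> (nat \<times> nat) set set \<Rightarrow> bool" where
  "is_1D_OOC v k lam C \<longleftrightarrow> is_2D_OOC 1 v k lam C"

text \<open>Johnson bound J(u x v,4,2) = floor(u/4 * floor((uv-1)/3 * floor((uv-2)/2))).\<close>
definition J42 :: "nat \<Rightarrow> nat \<Rightarrow> int" where
  "J42 u v = (let m = int u * int v in
     (int u * (((m - 1) * ((m - 2) div 2)) div 3)) div 4)"

end

theory Submission
  imports Defs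
begin

definition psi :: "nat \<Rightarrow> nat \<Rightarrow> int \<Rightarrow> nat \<times> nat" where
  "psi u v y = (nat (y mod int u), nat ((y div int u) mod int v))"

definition emb :: "nat \<Rightarrow> nat \<Rightarrow> nat \<Rightarrow> (nat \<times> nat) set \<Rightarrow> (nat \<times> nat) set" where
  "emb u v t A = (\<lambda>p. psi u v (int (snd p) + int t)) ` A"

lemma psi_eq:
  assumes "u > 0" "v > 0"
  shows "psi u v y = psi u v z \<longleftrightarrow> y mod int (u*v) = z mod int (u*v)"
proof -
  have e: "\<And>w. w mod int (u*v) = int u * (w div int u mod int v) + w mod int u"
    using mod_mult2_eq'[of _ u v] by simp
  have nn: "\<And>w. 0 \<le> w mod int u" "\<And>w. 0 \<le> w div int u mod int v"
    using assms by simp_all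
  have lt: "\<And>w. w mod int u < int u" using assms by simp
  show ?thesis
  proof
    assume h: "psi u v y = psi u v z"
    have "y mod int u = z mod int u \<and> y div int u mod int v = z div int u mod int v"
    proof -
      have a: "nat (y mod int u) = nat (z mod int u)" using h by (simp add: psi_def)
      have b: "nat (y div int u mod int v) = nat (z div int u mod int v)" using h by (simp add: psi_def)
      show ?thesis using a b nn eq_nat_nat_iff by metis
    qed
    then show "y mod int (u*v) = z mod int (u*v)" using e by simp
  next
    assume h: "y mod int (u*v) = z mod int (u*v)"
    have "y mod int u = z mod int u"
    proof -
      have d: "int u dvd int (u*v)" by simp
      have "y mod int u = y mod int (u*v) mod int u" using mod_mod_cancel[OF d] by simp
      also have "\<dots> = z mod int (u*v) mod int u" using h by simp
      also have "\<dots> = z mod int u" using mod_mod_cancel[OF d] by simp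
      finally show ?thesis .
    qed
    moreover have "y div int u mod int v = z div int u mod int v"
    proof -
      have "int u * (y div int u mod int v) = int u * (z div int u mod int v)"
        using h e[of y] e[of z] \<open>y mod int u = z mod int u\<close> by simp
      then show ?thesis using assms by simp
    qed
    ultimately show "psi u v y = psi u v z" unfolding psi_def by simp
  qed
qed

lemma add_mod_cancel:
  fixes a b c n :: int
  assumes "(a + c) mod n = (b + c) mod n"
  shows "a mod n = b mod n"
proof -
  have "a mod n = ((a + c) mod n - c) mod n" by (simp add: mod_diff_left_eq)
  also have "\<dots> = ((b + c) mod n - c) mod n" using assms by simp
  also have "\<dots> = b mod n" by (simp add: mod_diff_left_eq)
  finally show ?thesis .
qed

lemma add_mod_cong:
  fixes a b c n :: int
  assumes "a mod n = b mod n"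
  shows "(a + c) mod n = (b + c) mod n"
  by (metis assms mod_add_left_eq)

lemma psi_shift:
  assumes "u > 0" "v > 0"
  shows "(fst (psi u v y), nat ((int (snd (psi u v y)) + r) mod int v)) = psi u v (y + r * int u)"
proof -
  have "(y + r * int u) div int u = y div int u + r" using assms by simp
  moreover have "(y + r * int u) mod int u = y mod int u" by simp
  moreover have "int (nat (y div int u mod int v)) = y div int u mod int v" using assms by simp
  ultimately show ?thesis unfolding psi_def by (simp add: mod_add_left_eq)
qed

lemma psi_range:
  assumes "u > 0" "v > 0"
  shows "psi u v y \<in> {0..<u} \<times> {0..<v}"
  using assms unfolding psi_def by (auto simp: nat_less_iff)

lemma inj_emb:
  fixes A :: "(nat \<times> nat) set"
  assumes "u > 0" "v > 0" "A \<subseteq> {0..<1} \<times> {0..<u*v}"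
  shows "inj_on (\<lambda>p. psi u v (int (snd p) + int s)) A"
proof
  fix p q assume p: "p \<in> A" and q: "q \<in> A"
    and h: "psi u v (int (snd p) + int s) = psi u v (int (snd q) + int s)"
  then have "(int (snd p) + int s) mod int (u*v) = (int (snd q) + int s) mod int (u*v)"
    using psi_eq[OF assms(1,2)] by blast
  then have "int (snd p) mod int (u*v) = int (snd q) mod int (u*v)"
    by (rule add_mod_cancel)
  moreover have "snd p < u*v" "snd q < u*v"
    using p q assms(3) by auto
  then have "int (snd p) < int (u*v)" "int (snd q) < int (u*v)"
    by (metis of_nat_less_iff)+
  ultimately have "snd p = snd q" by simp
  moreover have "p \<in> {0..<1} \<times> {0..<u*v}" "q \<in> {0..<1} \<times> {0..<u*v}" using p q assms(3) by blast+
  then have "fst p = 0" "fst q = 0" by auto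
  ultimately show "p = q" by (simp add: prod_eq_iff)
qed

lemma filter_pair: "{(i, j) \<in> X. P i j} = {p \<in> X. P (fst p) (snd p)}"
  by auto

lemma corr_emb:
  assumes u: "u > 0" and v: "v > 0" and A: "A \<subseteq> {0..<1} \<times> {0..<u*v}"
    and B: "B \<subseteq> {0..<1} \<times> {0..<u*v}"
  shows "corr v (emb u v s A) (emb u v t B) r = corr (u*v) A B (int s - int t + r * int u)"
proof -
  define R where "R = int s - int t + r * int u"
  define g where "g = (\<lambda>p::nat\<times>nat. psi u v (int (snd p) + int s))"
  have inj: "inj_on g A" unfolding g_def by (rule inj_emb[OF u v A])
  have key: "((fst (g p), nat ((int (snd (g p)) + r) mod int v)) \<in> emb u v t B)
      \<longleftrightarrow> ((fst p, nat ((int (snd p) + R) mod int (u*v))) \<in> B)" if p: "p \<in> A" for p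
  proof -
    have p0: "fst p = 0" using p A by auto
    have "((fst (g p), nat ((int (snd (g p)) + r) mod int v)) \<in> emb u v t B)
        \<longleftrightarrow> psi u v (int (snd p) + int s + r * int u) \<in> emb u v t B"
      unfolding g_def using psi_shift[OF u v] by simp
    also have "\<dots> \<longleftrightarrow> (\<exists>q\<in>B. (int (snd q) + int t) mod int (u*v) = (int (snd p) + int s + r * int u) mod int (u*v))"
    proof -
      have "psi u v (int (snd p) + int s + r * int u) \<in> emb u v t B \<longleftrightarrow>
         (\<exists>q\<in>B. psi u v (int (snd q) + int t) = psi u v (int (snd p) + int s + r * int u))"
        unfolding emb_def image_iff by (rule bex_cong[OF refl]) (rule eq_commute)
      then show ?thesis using psi_eq[OF u v] by simp
    qed
    also have "\<dots> \<longleftrightarrow> (\<exists>q\<in>B. int (snd q) = (int (snd p) + R) mod int (u*v))"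
    proof (rule bex_cong[OF refl])
      fix q assume q: "q \<in> B"
      then have "snd q < u*v" using B by auto
      then have qn: "int (snd q) < int (u*v)" by (metis of_nat_less_iff)
      have "(int (snd q) + int t) mod int (u*v) = (int (snd p) + int s + r * int u) mod int (u*v)
          \<longleftrightarrow> int (snd q) mod int (u*v) = (int (snd p) + R) mod int (u*v)"
      proof
        assume H: "(int (snd q) + int t) mod int (u*v) = (int (snd p) + int s + r * int u) mod int (u*v)"
        have HB: "int (snd p) + int s + r * int u = (int (snd p) + R) + int t" unfolding R_def by simp
        have "(int (snd q) + int t) mod int (u*v) = ((int (snd p) + R) + int t) mod int (u*v)"
          using H unfolding HB .
        then show "int (snd q) mod int (u*v) = (int (snd p) + R) mod int (u*v)"
          by (rule add_mod_cancel)
      next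
        assume "int (snd q) mod int (u*v) = (int (snd p) + R) mod int (u*v)"
        then have HA: "(int (snd q) + int t) mod int (u*v) = (int (snd p) + R + int t) mod int (u*v)"
          by (rule add_mod_cong)
        have HB: "int (snd p) + int s + r * int u = int (snd p) + R + int t" unfolding R_def by simp
        show "(int (snd q) + int t) mod int (u*v) = (int (snd p) + int s + r * int u) mod int (u*v)"
          unfolding HB by (rule HA)
      qed
      also have "\<dots> \<longleftrightarrow> int (snd q) = (int (snd p) + R) mod int (u*v)"
        using qn by simp
      finally show "(int (snd q) + int t) mod int (u*v) = (int (snd p) + int s + r * int u) mod int (u*v)
          \<longleftrightarrow> int (snd q) = (int (snd p) + R) mod int (u*v)" .
    qed
    also have "\<dots> \<longleftrightarrow> (fst p, nat ((int (snd p) + R) mod int (u*v))) \<in> B"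
    proof
      assume "\<exists>q\<in>B. int (snd q) = (int (snd p) + R) mod int (u*v)"
      then obtain q where q: "q \<in> B" "int (snd q) = (int (snd p) + R) mod int (u*v)" by blast
      have "fst q = 0" using q B by auto
      then have "q = (fst p, nat ((int (snd p) + R) mod int (u*v)))"
      proof -
        have "snd q = nat ((int (snd p) + R) mod int (u*v))" using q(2) by (metis nat_int)
        then show ?thesis using \<open>fst q = 0\<close> p0 by (simp add: prod_eq_iff)
      qed
      then show "(fst p, nat ((int (snd p) + R) mod int (u*v))) \<in> B" using q by simp
    next
      assume h: "(fst p, nat ((int (snd p) + R) mod int (u*v))) \<in> B"
      have "int (nat ((int (snd p) + R) mod int (u*v))) = (int (snd p) + R) mod int (u*v)"
        using u v by simp
      then show "\<exists>q\<in>B. int (snd q) = (int (snd p) + R) mod int (u*v)" using h by force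
    qed
    finally show ?thesis .
  qed
  have "{(i, j) \<in> emb u v s A. (i, nat ((int j + r) mod int v)) \<in> emb u v t B}
     = g ` {(i, j) \<in> A. (i, nat ((int j + R) mod int (u*v))) \<in> B}"
  proof -
    have "{(i, j) \<in> emb u v s A. (i, nat ((int j + r) mod int v)) \<in> emb u v t B}
       = {x \<in> g ` A. (fst x, nat ((int (snd x) + r) mod int v)) \<in> emb u v t B}"
      unfolding filter_pair emb_def g_def by simp
    also have "\<dots> = g ` {p \<in> A. (fst (g p), nat ((int (snd (g p)) + r) mod int v)) \<in> emb u v t B}"
      by blast
    also have "\<dots> = g ` {p \<in> A. (fst p, nat ((int (snd p) + R) mod int (u*v))) \<in> B}"
    proof -
      have "{p \<in> A. (fst (g p), nat ((int (snd (g p)) + r) mod int v)) \<in> emb u v t B}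
          = {p \<in> A. (fst p, nat ((int (snd p) + R) mod int (u*v))) \<in> B}"
      proof (rule Collect_cong)
        fix p show "(p \<in> A \<and> (fst (g p), nat ((int (snd (g p)) + r) mod int v)) \<in> emb u v t B)
           = (p \<in> A \<and> (fst p, nat ((int (snd p) + R) mod int (u*v))) \<in> B)"
          using key[of p] by blast
      qed
      then show ?thesis by simp
    qed
    finally show ?thesis unfolding filter_pair .
  qed
  moreover have "inj_on g {(i, j) \<in> A. (i, nat ((int j + R) mod int (u*v))) \<in> B}"
    using inj by (rule inj_on_subset) auto
  ultimately show ?thesis unfolding corr_def R_def
    by (simp add: card_image)
qed


lemma corr_self:
  assumes "is_matrix u v X" "v > 0"
  shows "corr v X X 0 = card X"
proof -
  have "{(i, j) \<in> X. (i, nat ((int j + 0) mod int v)) \<in> X} = X"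
  proof -
    have "\<And>i j. (i, j) \<in> X \<Longrightarrow> nat ((int j + 0) mod int v) = j"
      using assms unfolding is_matrix_def by auto
    then show ?thesis by auto
  qed
  then show ?thesis unfolding corr_def by simp
qed

lemma small_eq:
  fixes s t u :: nat
  assumes "(int s - int t) mod int u = 0" "s < u" "t < u"
  shows "s = t"
proof (rule ccontr)
  assume "s \<noteq> t"
  then have ne: "int s - int t \<noteq> 0" by simp
  have "int u dvd (int s - int t)" using assms(1) by (simp add: dvd_eq_mod_eq_0)
  then have "\<bar>int u\<bar> \<le> \<bar>int s - int t\<bar>" using dvd_imp_le_int ne by blast
  then show False using assms(2,3) by linarith
qed

lemma shift_zero:
  fixes s t u v :: nat and r :: int
  assumes "u > 0" "v > 0" "s < u" "t < u"
    and h: "(int s - int t + r * int u) mod int (u*v) = 0"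
  shows "s = t \<and> r mod int v = 0"
proof -
  have d: "int u dvd int (u*v)" by simp
  have "(int s - int t + r * int u) mod int u = 0"
    using mod_mod_cancel[OF d, of "int s - int t + r * int u"] h by simp
  then have "(int s - int t) mod int u = 0" by simp
  then have st: "s = t" by (rule small_eq[OF _ assms(3,4)])
  then have "(int u * r) mod (int u * int v) = 0" using h by (simp add: mult.commute)
  moreover have "(int u * r) mod (int u * int v) = int u * (r mod int v)" by (rule mult_mod_right[symmetric])
  ultimately have "int u * (r mod int v) = 0" by simp
  then have "r mod int v = 0" using assms(1) by simp
  with st show ?thesis by simp
qed

lemma lift:
  assumes u: "u > 0" and v: "v > 0" and C: "is_2D_OOC 1 (u*v) 4 2 C" and fin: "finite C"
  shows "\<exists>C'. is_2D_OOC u v 4 2 C' \<and> finite C' \<and> card C' = u * card C"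
proof -
  have mat: "\<And>A. A \<in> C \<Longrightarrow> A \<subseteq> {0..<1} \<times> {0..<u*v} \<and> card A = 4"
    using conjunct1[OF C[unfolded is_2D_OOC_def]] unfolding is_matrix_def by simp
  have cor: "\<And>A B r. A \<in> C \<Longrightarrow> B \<in> C \<Longrightarrow> A \<noteq> B \<or> r mod int (u*v) \<noteq> 0 \<Longrightarrow> corr (u*v) A B r \<le> 2"
    using conjunct2[OF C[unfolded is_2D_OOC_def]] by simp
  define E where "E = (\<lambda>(A, t). emb u v t A)"
  define C' where "C' = E ` (C \<times> {..<u})"
  have embmat: "is_matrix u v (emb u v t A)" for A t
    unfolding is_matrix_def emb_def using psi_range[OF u v] by blast
  have embcard: "card (emb u v t A) = 4" if "A \<in> C" for A t
    unfolding emb_def using card_image[OF inj_emb[OF u v, of A t]] mat[OF that] by simp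
  have corrE: "corr v (emb u v s A) (emb u v t B) r = corr (u*v) A B (int s - int t + r * int u)"
    if "A \<in> C" "B \<in> C" for A B s t r
    by (rule corr_emb[OF u v]) (use mat that in simp_all)
  have injE: "inj_on E (C \<times> {..<u})"
  proof (rule inj_onI)
    fix x y assume x: "x \<in> C \<times> {..<u}" and y: "y \<in> C \<times> {..<u}" and e: "E x = E y"
    obtain A s where xa: "x = (A, s)" "A \<in> C" "s < u" using x by auto
    obtain B t where yb: "y = (B, t)" "B \<in> C" "t < u" using y by auto
    have ee: "emb u v s A = emb u v t B" using e xa yb unfolding E_def by simp
    have "corr v (emb u v s A) (emb u v t B) 0 = 4"
    proof -
      have "corr v (emb u v s A) (emb u v s A) 0 = card (emb u v s A)" by (rule corr_self[OF embmat v])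
      moreover have "card (emb u v s A) = 4" by (rule embcard[OF xa(2)])
      ultimately show ?thesis using ee by metis
    qed
    then have c4: "corr (u*v) A B (int s - int t + 0 * int u) = 4" using corrE[OF xa(2) yb(2), of s t 0] by simp
    have "\<not> (A \<noteq> B \<or> (int s - int t + 0 * int u) mod int (u*v) \<noteq> 0)"
    proof
      assume "A \<noteq> B \<or> (int s - int t + 0 * int u) mod int (u*v) \<noteq> 0"
      then have "corr (u*v) A B (int s - int t + 0 * int u) \<le> 2" using cor xa yb by blast
      then show False using c4 by simp
    qed
    then have AB: "A = B" and m0: "(int s - int t + 0 * int u) mod int (u*v) = 0" by blast+
    have "s = t" using shift_zero[OF u v xa(3) yb(3) m0] by blast
    note AB this
    then show "x = y" using xa yb by simp
  qed
  have "is_2D_OOC u v 4 2 C'"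
    unfolding is_2D_OOC_def
  proof (rule conjI)
    show "\<forall>X\<in>C'. is_matrix u v X \<and> card X = 4"
    proof
      fix X assume "X \<in> C'"
      then obtain A s where "A \<in> C" "X = emb u v s A" unfolding C'_def E_def by auto
      then show "is_matrix u v X \<and> card X = 4" using embmat embcard by simp
    qed
  next
    show "\<forall>X\<in>C'. \<forall>Y\<in>C'. \<forall>r. X \<noteq> Y \<or> \<not> r mod int v = 0 \<longrightarrow> corr v X Y r \<le> 2"
    proof (intro ballI allI impI)
    fix X Y r assume X: "X \<in> C'" and Y: "Y \<in> C'" and h: "X \<noteq> Y \<or> \<not> r mod int v = 0"
    obtain A s where xa: "A \<in> C" "s < u" "X = emb u v s A" using X unfolding C'_def E_def by auto
    obtain B t where yb: "B \<in> C" "t < u" "Y = emb u v t B" using Y unfolding C'_def E_def by auto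
    have "A \<noteq> B \<or> (int s - int t + r * int u) mod int (u*v) \<noteq> 0"
    proof (rule ccontr)
      assume "\<not> (A \<noteq> B \<or> (int s - int t + r * int u) mod int (u*v) \<noteq> 0)"
      then have AB: "A = B" and m0: "(int s - int t + r * int u) mod int (u*v) = 0" by blast+
      have "s = t \<and> r mod int v = 0" using shift_zero[OF u v xa(2) yb(2) m0] .
      note AB this
      then show False using h xa yb by simp
    qed
    then have "corr (u*v) A B (int s - int t + r * int u) \<le> 2" using cor xa yb by blast
    then show "corr v X Y r \<le> 2" using corrE[OF xa(1) yb(1), of s t r] xa(3) yb(3) by simp
  qed
  qed
  moreover have "finite C'" unfolding C'_def using fin by simp
  moreover have "card C' = u * card C"
    unfolding C'_def using card_image[OF injE] fin by (simp add: card_cartesian_product)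
  ultimately show ?thesis by blast
qed

lemma Mmod:
  fixes c e q :: int
  assumes "int n mod 24 = c" "(c - 2) div 2 = e" "(c-1)*e = 3*q"
  shows "(((int n - 1) * ((int n - 2) div 2)) div 3) mod 4 = q mod 4"
proof -
  define k where "k = int n div 24"
  have n: "int n = 24*k + c" using assms(1) mult_div_mod_eq[of 24 "int n"] unfolding k_def by linarith
  have "int n - 2 = (c - 2) + 2*(12*k)" using n by simp
  then have h: "(int n - 2) div 2 = 12*k + e" using assms(2) by simp
  have "(int n - 1) * (12*k + e) = 3*(4*(24*k^2 + (2*e + c - 1)*k) + q)"
    using n assms(3) by (simp add: algebra_simps power2_eq_square)
  then have "((int n - 1) * ((int n - 2) div 2)) div 3 = 4*(24*k^2 + (2*e + c - 1)*k) + q"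
    using h by simp
  then show ?thesis by (metis add.commute mod_mult_self2)
qed

lemma Jeq:
  assumes "u > 0" "v > 0" "n = u * v"
  shows "J42 u v = (int u * (((int n - 1) * ((int n - 2) div 2)) div 3)) div 4"
    "J42 1 n = (((int n - 1) * ((int n - 2) div 2)) div 3) div 4"
  using assms unfolding J42_def Let_def by simp_all

lemma mod24:
  fixes n :: nat
  shows "n mod 24 = 6 * (n mod 24 div 6) + n mod 6 \<and> n mod 24 div 6 < 4"
proof -
  have "n mod 24 mod 6 = n mod 6" by (rule mod_mod_cancel) simp
  then show ?thesis by (metis div_mult_mod_eq mult.commute less_mult_imp_div_less mod_less_divisor zero_less_numeral numeral_times_numeral semiring_norm(12) semiring_norm(13) num_double)
qed

lemma cases1:
  assumes "n mod 6 \<in> {1,3::nat} \<or> n mod 24 \<in> {2,10::nat}"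
  shows "(((int n - 1) * ((int n - 2) div 2)) div 3) mod 4 = 0"
proof -
  have d: "n mod 6 = 1 \<or> n mod 6 = 3 \<or> n mod 24 = 2 \<or> n mod 24 = 10" using assms by auto
  obtain a where m: "n mod 24 = 6 * a + n mod 6" "a < 4" using mod24[of n] by blast
  have "a = 0 \<or> a = 1 \<or> a = 2 \<or> a = 3" using m(2) by auto
  then have "n mod 24 \<in> {1,3,7,9,13,15,19,21,2,10}" using d m(1) by auto
  moreover have "int n mod 24 = int (n mod 24)" by (simp add: of_nat_mod)
  ultimately have "int n mod 24 \<in> {1,3,7,9,13,15,19,21,2,10}" by simp
  then show ?thesis
  proof (elim insertE emptyE)
    assume "int n mod 24 = 1" then show ?thesis using Mmod[of n 1 "-1" 0] by simp
  next assume "int n mod 24 = 3" then show ?thesis using Mmod[of n 3 0 0] by simp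
  next assume "int n mod 24 = 7" then show ?thesis using Mmod[of n 7 2 4] by simp
  next assume "int n mod 24 = 9" then show ?thesis using Mmod[of n 9 3 8] by simp
  next assume "int n mod 24 = 13" then show ?thesis using Mmod[of n 13 5 20] by simp
  next assume "int n mod 24 = 15" then show ?thesis using Mmod[of n 15 6 28] by simp
  next assume "int n mod 24 = 19" then show ?thesis using Mmod[of n 19 8 48] by simp
  next assume "int n mod 24 = 21" then show ?thesis using Mmod[of n 21 9 60] by simp
  next assume "int n mod 24 = 2" then show ?thesis using Mmod[of n 2 0 0] by simp
  next assume "int n mod 24 = 10" then show ?thesis using Mmod[of n 10 4 12] by simp
  qed
qed

lemma cases2:
  assumes "n mod 24 \<in> {4,20::nat}"
  shows "(((int n - 1) * ((int n - 2) div 2)) div 3) mod 4 = 1"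
proof -
  have "int n mod 24 = int (n mod 24)" by (simp add: of_nat_mod)
  then have "int n mod 24 \<in> {4,20}" using assms by auto
  then show ?thesis
  proof (elim insertE emptyE)
    assume "int n mod 24 = 4" then show ?thesis using Mmod[of n 4 1 1] by simp
  next assume "int n mod 24 = 20" then show ?thesis using Mmod[of n 20 9 57] by simp
  qed
qed

theorem corollary2p5:
  fixes n :: nat
  assumes "n > 0"
    and "\<exists>C. is_1D_OOC n 4 2 C \<and> finite C \<and> int (card C) = J42 1 n"
  shows "((n mod 6 \<in> {1, 3} \<or> n mod 24 \<in> {2, 10}) \<longrightarrow>
           (\<forall>u v. u > 0 \<and> v > 0 \<and> n = u * v \<longrightarrow>
              (\<exists>C. is_2D_OOC u v 4 2 C \<and> finite C \<and> int (card C) = J42 u v)))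
       \<and> (\<forall>n1. n mod 24 \<in> {4, 20} \<and> n = 2 * n1 \<longrightarrow>
              (\<exists>C. is_2D_OOC 2 n1 4 2 C \<and> finite C \<and> int (card C) = J42 2 n1))"
proof -
  obtain C where C: "is_1D_OOC n 4 2 C" "finite C" "int (card C) = J42 1 n" using assms(2) by blast
  have C2: "is_2D_OOC 1 n 4 2 C" using C(1) unfolding is_1D_OOC_def .
  define M where "M = ((int n - 1) * ((int n - 2) div 2)) div 3"
  have J1: "J42 1 n = M div 4" using Jeq(2)[of 1 n n] assms(1) unfolding M_def by simp
  show ?thesis
  proof (intro conjI impI allI)
    fix u v
    assume H: "n mod 6 \<in> {1, 3} \<or> n mod 24 \<in> {2, 10}" and uv: "u > 0 \<and> v > 0 \<and> n = u * v"
    have C2': "is_2D_OOC 1 (u*v) 4 2 C" using C2 uv by simp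
    obtain C' where C': "is_2D_OOC u v 4 2 C'" "finite C'" "card C' = u * card C"
      using lift[OF _ _ C2' C(2)] uv by blast
    have m0: "M mod 4 = 0" using cases1[OF H] unfolding M_def .
    have "J42 u v = (int u * M) div 4" using Jeq(1)[of u v n] uv unfolding M_def by simp
    also have "\<dots> = int u * (M div 4)"
    proof -
      have "M = 4 * (M div 4)" using m0 div_mult_mod_eq[of M 4] by simp
      then have e: "int u * M = 4 * (int u * (M div 4))" by (metis mult.left_commute)
      show ?thesis unfolding e by simp
    qed
    finally have "int (card C') = J42 u v" using C'(3) C(3) J1 by simp
    then show "\<exists>C. is_2D_OOC u v 4 2 C \<and> finite C \<and> int (card C) = J42 u v"
      using C'(1,2) by blast
  next
    fix n1
    assume H: "n mod 24 \<in> {4, 20} \<and> n = 2 * n1"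
    then have n1: "n1 > 0" "n = 2 * n1" using assms(1) by auto
    have C2': "is_2D_OOC 1 (2*n1) 4 2 C" using C2 n1 by simp
    obtain C' where C': "is_2D_OOC 2 n1 4 2 C'" "finite C'" "card C' = 2 * card C"
      using lift[OF _ n1(1) C2' C(2)] by auto
    have m1: "M mod 4 = 1" using cases2 H unfolding M_def by blast
    have "J42 2 n1 = (2 * M) div 4" using Jeq(1)[of 2 n1 n] n1 unfolding M_def by simp
    also have "\<dots> = 2 * (M div 4)"
    proof -
      have "M = 4 * (M div 4) + 1" using m1 div_mult_mod_eq[of M 4] by simp
      then have "2 * M = 4 * (2 * (M div 4)) + 2" by simp
      then show ?thesis by simp
    qed
    finally have "int (card C') = J42 2 n1" using C'(3) C(3) J1 by simp
    then show "\<exists>C. is_2D_OOC 2 n1 4 2 C \<and> finite C \<and> int (card C) = J42 2 n1"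
      using C'(1,2) by blast
  qed
qed

end
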